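(* Let $\mathcal S$ be a set. For $x\in\mathcal S$ and $\varepsilon>0$ let $(\xi^{x,\varepsilon}_n)_{n\ge0}$, $(\zeta^{x,\varepsilon}_n)_{n\ge0}$ be sequences of random variables adapted to a filtration $(\mathcal F^{x,\varepsilon}_n)$. Suppose $\xi^{x,\varepsilon}_0=0$ and there is a function $e(\varepsilon)>0$ such that $\mathbb E(\xi^{x,\varepsilon}_{n+1}\mid\mathcal F^{x,\varepsilon}_n)/e(\varepsilon)\to1$ as $\varepsilon\downarrow0$ uniformly in $x\in\mathcal S$, $n\ge0$ and the elements of the probability space (for suitable versions of the conditional expectations); and that $\mathbb E((\xi^{x,\varepsilon}_{n+1})^2\mid\mathcal F^{x,\varepsilon}_n)\le C(e(\varepsilon))^2$ for some constant $C$, all small $\varepsilon$, all $x\in\mathcal S$, $n\ge0$. Suppose $\zeta^{x,\varepsilon}_n\in\{0,1\}$, $\zeta^{x,\varepsilon}_0=1$, and $\zeta^{x,\varepsilon}_n=0$ implies $\zeta^{x,\varepsilon}_m=0$ for $m\ge n$. Suppose there is a positive function $r(\varepsilon)$ with $r(\varepsilon)\to0$ such that $\mathbb P(\zeta^{x,\varepsilon}_{n+1}=0\mid\zeta^{x,\varepsilon}_n=1)/r(\varepsilon)\to1$ as $\varepsilon\downarrow0$ uniformly in $x\in\mathcal S$, $n\ge0$. Let $K^{x,\varepsilon}=\min\{n:\zeta^{x,\varepsilon}_n=0\}$. Then for each $t\ge0$, $$\lim_{\varepsilon\downarrow0}\mathbb P\big(r(\varepsilon)K^{x,\varepsilon}\ge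 t\big)=e^{-t},\qquad\lim_{\varepsilon\downarrow0}\mathbb P\Big((e(\varepsilon))^{-1}r(\varepsilon)\sum_{n=0}^\infty\xi^{x,\varepsilon}_{n+1}\zeta^{x,\varepsilon}_n\ge t\Big)=e^{-t},$$ uniformly in $x\in\mathcal S$. *)

theory Defs
  imports "HOL-Probability.Probability"
begin

text \<open>K = min{n. zeta n = 0}, valued in enat (infinity if zeta never vanishes).\<close>
definition first_zero :: "(nat \<Rightarrow> 'a \<Rightarrow> real) \<Rightarrow> 'a \<Rightarrow> enat" where
  "first_zero \<zeta> \<omega> = (INF n\<in>{n. \<zeta> n \<omega> = 0}. enat n)"

end

theory Submission
  imports Defs
begin

lemma exp_lip:
  fixes a b :: real
  assumes "0 \<le> a" "a \<le> b"
  shows "exp (-a) - exp (-b) \<le> b - a"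
proof -
  have "exp (-b) = exp (-a) * exp (-(b-a))" by (simp flip: exp_add)
  moreover have "1 - (b - a) \<le> exp (-(b-a))" using exp_ge_add_one_self[of "a-b"] by (simp add: algebra_simps)
  moreover have "exp (-a) \<le> 1" using assms by simp
  moreover have "exp (-(b-a)) \<le> 1" using assms by simp
  ultimately have "exp (-a) - exp (-b) = exp (-a) * (1 - exp (-(b-a)))" by (simp add: algebra_simps)
  also have "\<dots> \<le> 1 * (1 - exp (-(b-a)))"
    using \<open>exp (-(b-a)) \<le> 1\<close> \<open>exp (-a) \<le> 1\<close> by (intro mult_right_mono) auto
  also have "\<dots> \<le> b - a" using \<open>1 - (b - a) \<le> exp (-(b-a))\<close> by simp
  finally show ?thesis .
qed

lemma exp_lip_min:
  fixes u s :: real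
  assumes "0 \<le> s" "u \<le> s"
  shows "min 1 (exp (-u)) \<le> exp (-s) + (s - u)"
proof (cases "u \<ge> 0")
  case True then show ?thesis using exp_lip[of u s] assms by linarith
next
  case False
  have "1 - exp (-s) \<le> s" using exp_lip[of 0 s] assms by simp
  then show ?thesis using False by linarith
qed

lemma first_zero_ge_iff:
  "enat m \<le> first_zero \<zeta> \<omega> \<longleftrightarrow> (\<forall>n<m. \<zeta> n \<omega> \<noteq> 0)"
proof -
  have "enat m \<le> first_zero \<zeta> \<omega> \<longleftrightarrow> (\<forall>n\<in>{n. \<zeta> n \<omega> = 0}. enat m \<le> enat n)"
    unfolding first_zero_def by (rule le_INF_iff)
  then show ?thesis by (auto simp: not_less[symmetric])
qed

lemma first_zero_finite:
  assumes "\<zeta> N \<omega> = 0"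
  shows "\<exists>k\<le>N. first_zero \<zeta> \<omega> = enat k \<and> (\<forall>n<k. \<zeta> n \<omega> \<noteq> 0) \<and> \<zeta> k \<omega> = 0"
proof -
  define k where "k = (LEAST n. \<zeta> n \<omega> = 0)"
  have k0: "\<zeta> k \<omega> = 0" unfolding k_def by (rule LeastI[of _ N]) (rule assms)
  have kN: "k \<le> N" unfolding k_def by (rule Least_le) (rule assms)
  have lt: "\<forall>n<k. \<zeta> n \<omega> \<noteq> 0"
  proof (intro allI impI)
    fix n assume "n < k"
    then show "\<zeta> n \<omega> \<noteq> 0" unfolding k_def by (rule not_less_Least)
  qed
  have 1: "enat k \<le> first_zero \<zeta> \<omega>" using lt by (simp only: first_zero_ge_iff)
  have 2: "first_zero \<zeta> \<omega> \<le> enat k" unfolding first_zero_def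
    by (rule INF_lower) (simp add: k0)
  have "first_zero \<zeta> \<omega> = enat k" using 1 2 by (rule antisym[rotated])
  then show ?thesis using k0 kN lt by blast
qed

lemma ennreal_mult_enat_iff:
  fixes r s :: real
  assumes "r \<ge> 0"
  shows "ennreal s \<le> ennreal r * ennreal_of_enat (enat k) \<longleftrightarrow> s \<le> r * real k"
proof -
  have "ennreal r * ennreal_of_enat (enat k) = ennreal (r * real k)"
    using assms by (simp add: ennreal_mult ennreal_of_nat_eq_real_of_nat)
  moreover have "0 \<le> r * real k" using assms by simp
  ultimately show ?thesis using assms
  proof (cases "s \<ge> 0")
    case False
    then show ?thesis using \<open>0 \<le> r * real k\<close> by (simp add: ennreal_neg)
  qed simp
qed

lemma ennreal_mult_first_zero_iff:
  fixes r s :: real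
  assumes "r > 0" "s > 0"
  shows "ennreal s \<le> ennreal r * ennreal_of_enat K \<longleftrightarrow> enat (nat \<lceil>s / r\<rceil>) \<le> K"
proof (cases K)
  case (enat k)
  have "s \<le> r * real k \<longleftrightarrow> s / r \<le> real k" using assms by (simp add: field_simps)
  also have "\<dots> \<longleftrightarrow> nat \<lceil>s / r\<rceil> \<le> k" by (simp add: ceiling_le_iff nat_le_iff)
  finally show ?thesis using enat ennreal_mult_enat_iff[of r s k] assms by simp
next
  case infinity
  then show ?thesis using assms by (simp add: ennreal_mult_top)
qed


locale kset = prob_space M for M :: "'a measure" +
  fixes F :: "nat \<Rightarrow> 'a measure" and \<xi> \<zeta> :: "nat \<Rightarrow> 'a \<Rightarrow> real"
  assumes subalg: "\<And>n. subalgebra M (F n)"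
    and filt: "\<And>n m. n \<le> m \<Longrightarrow> sets (F n) \<subseteq> sets (F m)"
    and adapt_xi: "\<And>n. \<xi> n \<in> borel_measurable (F n)"
    and adapt_zeta: "\<And>n. \<zeta> n \<in> borel_measurable (F n)"
    and zeta01: "\<And>n \<omega>. \<omega> \<in> space M \<Longrightarrow> \<zeta> n \<omega> \<in> {0, 1}"
    and zeta0: "\<And>\<omega>. \<omega> \<in> space M \<Longrightarrow> \<zeta> 0 \<omega> = 1"
    and absorb: "\<And>n m \<omega>. \<omega> \<in> space M \<Longrightarrow> n \<le> m \<Longrightarrow> \<zeta> n \<omega> = 0 \<Longrightarrow> \<zeta> m \<omega> = 0"
begin

lemma meas_zeta[measurable]: "\<zeta> n \<in> borel_measurable M"
  using measurable_from_subalg[OF subalg adapt_zeta] .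

lemma meas_xi[measurable]: "\<xi> n \<in> borel_measurable M"
  using measurable_from_subalg[OF subalg adapt_xi] .

definition q where "q n = prob {\<omega>\<in>space M. \<zeta> n \<omega> = 1}"
definition p where "p n = cond_prob M (\<lambda>\<omega>. \<zeta> (Suc n) \<omega> = 0) (\<lambda>\<omega>. \<zeta> n \<omega> = 1)"

lemma q_Suc: "q (Suc n) = q n * (1 - p n)"
proof -
  let ?A = "{\<omega>\<in>space M. \<zeta> n \<omega> = 1}" and ?B = "{\<omega>\<in>space M. \<zeta> (Suc n) \<omega> = 0 \<and> \<zeta> n \<omega> = 1}"
  have AB: "{\<omega>\<in>space M. \<zeta> (Suc n) \<omega> = 1} = ?A - ?B"
  proof (intro equalityI subsetI)
    fix \<omega> assume "\<omega> \<in> {\<omega>\<in>space M. \<zeta> (Suc n) \<omega> = 1}"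
    then have w: "\<omega> \<in> space M" and z: "\<zeta> (Suc n) \<omega> = 1" by auto
    have "\<zeta> n \<omega> \<noteq> 0"
    proof
      assume "\<zeta> n \<omega> = 0"
      then have "\<zeta> (Suc n) \<omega> = 0" using absorb[OF w, of n "Suc n"] by simp
      then show False using z by simp
    qed
    then have "\<zeta> n \<omega> = 1" using zeta01[OF w, of n] by simp
    then show "\<omega> \<in> ?A - ?B" using w z by simp
  next
    fix \<omega> assume "\<omega> \<in> ?A - ?B"
    then have w: "\<omega> \<in> space M" and z: "\<zeta> n \<omega> = 1" and nz: "\<zeta> (Suc n) \<omega> \<noteq> 0" by auto
    then have "\<zeta> (Suc n) \<omega> = 1" using zeta01[OF w, of "Suc n"] by simp
    then show "\<omega> \<in> {\<omega>\<in>space M. \<zeta> (Suc n) \<omega> = 1}" using w by simp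
  qed
  have [simp]: "?A \<in> sets M" "?B \<in> sets M" by measurable
  have BA: "?B \<subseteq> ?A" by blast
  have qS: "q (Suc n) = prob ?A - prob ?B" unfolding q_def AB
    by (rule finite_measure_Diff) (auto simp: BA)
  have pn: "p n = prob ?B / prob ?A" unfolding p_def cond_prob_def by simp
  show ?thesis
  proof (cases "prob ?A = 0")
    case True
    then have "prob ?B = 0" using finite_measure_mono[OF BA] measure_nonneg[of M ?B] by simp
    then show ?thesis using True qS unfolding q_def by simp
  next
    case False
    then have "prob ?B = p n * prob ?A" unfolding pn by simp
    then show ?thesis using qS unfolding q_def by (simp add: algebra_simps)
  qed
qed

lemma q_0: "q 0 = 1"
proof -
  have "{\<omega>\<in>space M. \<zeta> 0 \<omega> = 1} = space M" using zeta0 by auto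
  then show ?thesis unfolding q_def by (simp add: prob_space)
qed

lemma q_nonneg: "q n \<ge> 0" unfolding q_def by simp

lemma q_bounds:
  assumes "\<And>n. lo \<le> p n" "\<And>n. p n \<le> hi" "hi \<le> 1"
  shows "(1-hi)^n \<le> q n \<and> q n \<le> (1-lo)^n"
proof (induction n)
  case 0 then show ?case by (simp add: q_0)
next
  case (Suc n)
  have lo1: "lo \<le> 1" using assms(1)[of 0] assms(2)[of 0] assms(3) by linarith
  have "(1-hi)^Suc n = (1-hi)^n * (1-hi)" by simp
  also have "\<dots> \<le> q n * (1 - p n)"
    using Suc assms(2)[of n] assms(3) q_nonneg[of n] by (intro mult_mono) auto
  also have "\<dots> = q (Suc n)" by (simp add: q_Suc)
  finally have 1: "(1-hi)^Suc n \<le> q (Suc n)" .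
  have "q (Suc n) = q n * (1 - p n)" by (simp add: q_Suc)
  also have "\<dots> \<le> (1-lo)^n * (1-lo)"
    using Suc assms(1)[of n] assms(2)[of n] assms(3) lo1 q_nonneg[of n] by (intro mult_mono) auto
  finally show ?case using 1 by (simp add: mult.commute)
qed

lemma K_event:
  assumes "r > 0" "s > 0"
  shows "{\<omega>\<in>space M. ennreal s \<le> ennreal r * ennreal_of_enat (first_zero \<zeta> \<omega>)}
       = {\<omega>\<in>space M. \<zeta> (nat \<lceil>s / r\<rceil> - 1) \<omega> = 1}"
proof -
  define m where "m = nat \<lceil>s / r\<rceil>"
  have "(1::int) \<le> \<lceil>s / r\<rceil>" using assms by (simp add: one_le_ceiling)
  then have m1: "m \<ge> 1" unfolding m_def by linarith
  have iff: "(\<forall>n<m. \<zeta> n \<omega> \<noteq> 0) \<longleftrightarrow> \<zeta> (m - 1) \<omega> = 1" if w: "\<omega> \<in> space M" for \<omega>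
  proof
    assume "\<forall>n<m. \<zeta> n \<omega> \<noteq> 0"
    then have "\<zeta> (m - 1) \<omega> \<noteq> 0" using m1 by simp
    then show "\<zeta> (m - 1) \<omega> = 1" using zeta01[OF w, of "m - 1"] by simp
  next
    assume a: "\<zeta> (m - 1) \<omega> = 1"
    show "\<forall>n<m. \<zeta> n \<omega> \<noteq> 0"
    proof (intro allI impI notI)
      fix n assume "n < m" "\<zeta> n \<omega> = 0"
      then have "\<zeta> (m - 1) \<omega> = 0" using absorb[OF w, of n "m - 1"] by simp
      then show False using a by simp
    qed
  qed
  have "ennreal s \<le> ennreal r * ennreal_of_enat (first_zero \<zeta> \<omega>) \<longleftrightarrow> \<zeta> (m - 1) \<omega> = 1"
    if w: "\<omega> \<in> space M" for \<omega>
    unfolding ennreal_mult_first_zero_iff[OF assms] m_def[symmetric] first_zero_ge_iff iff[OF w] ..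
  then show ?thesis unfolding m_def by auto
qed

lemma part1:
  assumes "r > 0" "0 \<le> d" "d \<le> 1/2" "(1+d)*r \<le> 1/2"
    "\<And>n. (1-d)*r \<le> p n" "\<And>n. p n \<le> (1+d)*r" "s \<ge> 0"
  shows "\<bar>prob {\<omega>\<in>space M. ennreal s \<le> ennreal r * ennreal_of_enat (first_zero \<zeta> \<omega>)} - exp(-s)\<bar>
           \<le> s * d + 8 * s * r + r"
proof (cases "s = 0")
  case True
  then have "{\<omega>\<in>space M. ennreal s \<le> ennreal r * ennreal_of_enat (first_zero \<zeta> \<omega>)} = space M" by auto
  then show ?thesis using True assms by (simp add: prob_space)
next
  case False
  then have s: "s > 0" using assms by auto
  define k where "k = nat \<lceil>s / r\<rceil> - 1"
  have "(1::int) \<le> \<lceil>s / r\<rceil>" using assms s by (simp add: one_le_ceiling)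
  then have m1: "nat \<lceil>s / r\<rceil> \<ge> 1" by linarith
  have kle: "real k \<le> s / r" unfolding k_def using m1
    by (simp add: of_nat_diff) linarith
  have kge: "real k \<ge> s / r - 1" unfolding k_def using m1
    by (simp add: of_nat_diff) linarith
  have rk1: "r * real k \<le> s" using kle assms(1) by (simp add: field_simps)
  have rk2: "r * real k \<ge> s - r" using kge assms(1) by (simp add: field_simps)
  have ev: "prob {\<omega>\<in>space M. ennreal s \<le> ennreal r * ennreal_of_enat (first_zero \<zeta> \<omega>)} = q k"
    unfolding K_event[OF assms(1) s] q_def k_def ..
  have qb: "(1-(1+d)*r)^k \<le> q k \<and> q k \<le> (1-(1-d)*r)^k"
    by (rule q_bounds) (use assms in auto)
  have "(1-d)*r \<le> (1+d)*r" using assms by (intro mult_right_mono) auto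
  then have dr1: "(1-d)*r \<le> 1" using assms by linarith
  have "(1-(1-d)*r)^k \<le> exp (-((1-d)*r))^k"
    using exp_ge_add_one_self[of "-((1-d)*r)"] assms dr1 by (intro power_mono) auto
  also have "\<dots> = exp (- ((1-d) * (r * real k)))"
    by (simp flip: exp_of_nat_mult add: algebra_simps)
  also have "\<dots> \<le> exp (- ((1-d) * (s - r)))"
  proof -
    have "(1-d) * (s - r) \<le> (1-d) * (r * real k)" using rk2 assms by (intro mult_left_mono) auto
    then show ?thesis by simp
  qed
  finally have "q k \<le> exp (- ((1-d) * (s - r)))" using qb by linarith
  moreover have "q k \<le> 1" unfolding q_def by simp
  ultimately have "q k \<le> min 1 (exp (- ((1-d) * (s - r))))" by simp
  also have "\<dots> \<le> exp (-s) + (s - (1-d)*(s-r))"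
  proof (rule exp_lip_min)
    have "d * r \<le> r" using assms by (simp add: mult_left_le_one_le)
    moreover have "d * s \<ge> 0" using assms by simp
    ultimately show "(1-d)*(s-r) \<le> s" by (simp add: algebra_simps)
  qed (use assms in auto)
  finally have up0: "q k \<le> exp (-s) + (s - (1-d)*(s-r))" .
  have "0 \<le> d * r" using assms by simp
  then have up: "q k - exp (-s) \<le> s * d + r" using up0 by (simp add: algebra_simps)
  define y where "y = (1+d)*r"
  have y0: "0 \<le> y" "y \<le> 1/2" using assms unfolding y_def by auto
  have "exp (-(y + 2 * y^2)) \<le> exp (ln (1 - y))"
    using ln_one_minus_pos_lower_bound[OF y0] by simp
  also have "\<dots> = 1 - y" using y0 by simp
  finally have ey: "exp (-(y + 2 * y^2)) \<le> 1 - y" .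
  have "exp (- (s/r * (y + 2 * y^2))) \<le> exp (- (real k * (y + 2 * y^2)))"
  proof -
    have "real k * (y + 2 * y^2) \<le> s/r * (y + 2 * y^2)" using kle y0 by (intro mult_right_mono) auto
    then show ?thesis by simp
  qed
  also have "\<dots> = exp (-(y + 2 * y^2))^k"
    by (simp flip: exp_of_nat_mult add: algebra_simps)
  also have "\<dots> \<le> (1-y)^k" using ey by (intro power_mono) auto
  finally have lo: "exp (- (s/r * (y + 2 * y^2))) \<le> q k" using qb unfolding y_def by linarith
  have v: "s/r * (y + 2 * y^2) = s + s * (d + 2*(1+d)^2 * r)"
    unfolding y_def using assms by (simp add: field_simps power2_eq_square)
  have "(1+d)^2 \<le> 2^2" using assms by (intro power_mono) auto
  then have "s * (2*(1+d)^2 * r) \<le> s * (8 * r)" using s assms by (intro mult_left_mono) auto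
  then have vs: "s/r * (y + 2 * y^2) - s \<le> s * d + 8 * s * r" unfolding v by (simp add: algebra_simps)
  have "exp (-s) - exp (- (s/r * (y + 2 * y^2))) \<le> s/r * (y + 2 * y^2) - s"
  proof (rule exp_lip)
    have "0 \<le> s * (d + 2*(1+d)^2 * r)" using s assms by simp
    then show "s \<le> s/r * (y + 2 * y^2)" unfolding v by simp
  qed (use s in simp)
  then have lw: "exp (-s) - q k \<le> s * d + 8 * s * r" using lo vs by linarith
  have "0 \<le> 8 * s * r" using s assms by simp
  then show ?thesis unfolding ev abs_le_iff using up lw assms(1) by linarith
qed

lemma sub_F: "n \<le> m \<Longrightarrow> subalgebra (F m) (F n)"
  using subalg[of n] subalg[of m] filt[of n m] unfolding subalgebra_def by auto

lemma meas_F_mono: "n \<le> m \<Longrightarrow> f \<in> borel_measurable (F n) \<Longrightarrow> f \<in> borel_measurable (F m)"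
  using measurable_from_subalg[OF sub_F] by blast

lemma sfs: "sigma_finite_subalgebra M (F n)"
proof -
  have "finite_measure_subalgebra M (F n)"
    by (simp add: finite_measure_subalgebra_def finite_measure_subalgebra_axioms_def subalg finite_measure_axioms)
  then show ?thesis by (rule finite_measure_subalgebra_is_sigma_finite)
qed

definition g where "g n = real_cond_exp M (F n) (\<xi> (Suc n))"

lemma meas_g_F: "g n \<in> borel_measurable (F n)" unfolding g_def by simp
lemma meas_g[measurable]: "g n \<in> borel_measurable M" unfolding g_def by simp

lemma xi_sq:
  assumes "C \<ge> 0"
    and "AE \<omega> in M. nn_cond_exp M (F n) (\<lambda>\<omega>. ennreal ((\<xi> (Suc n) \<omega>)\<^sup>2)) \<omega> \<le> ennreal C"
  shows "integrable M (\<lambda>\<omega>. (\<xi> (Suc n) \<omega>)\<^sup>2)" "(\<integral>\<omega>. (\<xi> (Suc n) \<omega>)\<^sup>2 \<partial>M) \<le> C"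
proof -
  interpret S: sigma_finite_subalgebra M "F n" by (rule sfs)
  have "(\<integral>\<^sup>+\<omega>. ennreal ((\<xi> (Suc n) \<omega>)\<^sup>2) \<partial>M) = (\<integral>\<^sup>+\<omega>. 1 * ennreal ((\<xi> (Suc n) \<omega>)\<^sup>2) \<partial>M)"
    by simp
  also have "\<dots> = (\<integral>\<^sup>+\<omega>. 1 * nn_cond_exp M (F n) (\<lambda>\<omega>. ennreal ((\<xi> (Suc n) \<omega>)\<^sup>2)) \<omega> \<partial>M)"
    by (rule S.nn_cond_exp_intg[symmetric]) auto
  also have "\<dots> \<le> (\<integral>\<^sup>+\<omega>. ennreal C \<partial>M)"
    using assms(2) by (intro nn_integral_mono_AE) auto
  also have "\<dots> = ennreal C" by (simp add: emeasure_space_1)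
  finally have le: "(\<integral>\<^sup>+\<omega>. ennreal ((\<xi> (Suc n) \<omega>)\<^sup>2) \<partial>M) \<le> ennreal C" .
  show int: "integrable M (\<lambda>\<omega>. (\<xi> (Suc n) \<omega>)\<^sup>2)"
    using le by (intro integrableI_bounded) (auto simp: top_unique intro: le_less_trans)
  have "(\<integral>\<omega>. (\<xi> (Suc n) \<omega>)\<^sup>2 \<partial>M) = enn2real (\<integral>\<^sup>+\<omega>. ennreal ((\<xi> (Suc n) \<omega>)\<^sup>2) \<partial>M)"
    by (rule integral_eq_nn_integral) auto
  also have "\<dots> \<le> enn2real (ennreal C)" using le by (intro enn2real_mono) auto
  finally show "(\<integral>\<omega>. (\<xi> (Suc n) \<omega>)\<^sup>2 \<partial>M) \<le> C" using assms(1) by simp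
qed

definition D where "D N \<omega> = (\<Sum>n<N. \<zeta> n \<omega> * (\<xi> (Suc n) \<omega> - g n \<omega>))"

lemma meas_D_F: "D N \<in> borel_measurable (F N)"
  unfolding D_def
proof (intro borel_measurable_sum borel_measurable_times borel_measurable_diff)
  fix n assume "n \<in> {..<N}"
  then have "n \<le> N" "Suc n \<le> N" by auto
  then show "\<zeta> n \<in> borel_measurable (F N)" "\<xi> (Suc n) \<in> borel_measurable (F N)" "g n \<in> borel_measurable (F N)"
    using meas_F_mono adapt_zeta adapt_xi meas_g_F by blast+
qed

lemma meas_D[measurable]: "D N \<in> borel_measurable M"
  using measurable_from_subalg[OF subalg meas_D_F] .

lemma D_sq:
  assumes "e > 0" "d \<ge> 0" "C \<ge> 0"
    and gb: "\<And>n. AE \<omega> in M. \<bar>g n \<omega>\<bar> \<le> (1+d)*e"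
    and sec: "\<And>n. AE \<omega> in M. nn_cond_exp M (F n) (\<lambda>\<omega>. ennreal ((\<xi> (Suc n) \<omega>)\<^sup>2)) \<omega> \<le> ennreal (C * e\<^sup>2)"
  shows "integrable M (\<lambda>\<omega>. (D N \<omega>)\<^sup>2) \<and> (\<integral>\<omega>. (D N \<omega>)\<^sup>2 \<partial>M) \<le> N * ((2*C + 2*(1+d)^2) * e^2)"
proof (induction N)
  case 0 then show ?case by (simp add: D_def)
next
  case (Suc N)
  interpret S: sigma_finite_subalgebra M "F N" by (rule sfs)
  let ?x = "\<xi> (Suc N)" and ?z = "\<zeta> N" and ?g = "g N"
  define a where "a \<omega> = ?z \<omega> * (?x \<omega> - ?g \<omega>)" for \<omega>
  define f where "f \<omega> = D N \<omega> * ?z \<omega>" for \<omega>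
  have [measurable]: "a \<in> borel_measurable M" "f \<in> borel_measurable M" unfolding a_def f_def by auto
  have fF: "f \<in> borel_measurable (F N)" unfolding f_def using meas_D_F adapt_zeta by auto
  have Ce: "C * e\<^sup>2 \<ge> 0" using assms by simp
  have ix: "integrable M (\<lambda>\<omega>. (?x \<omega>)\<^sup>2)" and ixle: "(\<integral>\<omega>. (?x \<omega>)\<^sup>2 \<partial>M) \<le> C * e\<^sup>2"
    using xi_sq[OF Ce sec] by auto
  have ig: "integrable M (\<lambda>\<omega>. (?g \<omega>)\<^sup>2)"
  proof (rule Bochner_Integration.integrable_bound[of _ "\<lambda>_. ((1+d)*e)^2"])
    show "AE \<omega> in M. norm ((?g \<omega>)\<^sup>2) \<le> norm (((1+d)*e)^2)"
      using gb[of N] proof eventually_elim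
      case (elim \<omega>) then show ?case using power_mono[OF elim abs_ge_zero, of 2] by simp
    qed
  qed auto
  have igle: "(\<integral>\<omega>. (?g \<omega>)\<^sup>2 \<partial>M) \<le> ((1+d)*e)^2"
  proof -
    have "(\<integral>\<omega>. (?g \<omega>)\<^sup>2 \<partial>M) \<le> (\<integral>\<omega>. ((1+d)*e)^2 \<partial>M)"
      using gb[of N] proof (intro integral_mono_AE ig)
      show "AE \<omega> in M. (?g \<omega>)\<^sup>2 \<le> ((1+d)*e)^2"
        using gb[of N] proof eventually_elim
        case (elim \<omega>) then show ?case using power_mono[OF elim abs_ge_zero, of 2] by simp
      qed
    qed auto
    then show ?thesis by (simp add: prob_space)
  qed
  have z01: "?z \<omega> \<in> {0,1}" if "\<omega> \<in> space M" for \<omega> using zeta01[OF that] .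
  have a_le: "(a \<omega>)\<^sup>2 \<le> 2 * (?x \<omega>)\<^sup>2 + 2 * (?g \<omega>)\<^sup>2" if "\<omega> \<in> space M" for \<omega>
  proof -
    have "(a \<omega>)\<^sup>2 \<le> (?x \<omega> - ?g \<omega>)\<^sup>2" using z01[OF that] unfolding a_def by auto
    also have "\<dots> \<le> 2 * (?x \<omega>)\<^sup>2 + 2 * (?g \<omega>)\<^sup>2"
    proof -
      have eq: "2 * (?x \<omega>)\<^sup>2 + 2 * (?g \<omega>)\<^sup>2 - (?x \<omega> - ?g \<omega>)\<^sup>2 = (?x \<omega> + ?g \<omega>)\<^sup>2"
        by (simp add: power2_eq_square algebra_simps)
      have "0 \<le> (?x \<omega> + ?g \<omega>)\<^sup>2" by simp
      then show ?thesis using eq by linarith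
    qed
    finally show ?thesis .
  qed
  have ia: "integrable M (\<lambda>\<omega>. (a \<omega>)\<^sup>2)"
    by (rule Bochner_Integration.integrable_bound[of _ "\<lambda>\<omega>. 2 * (?x \<omega>)\<^sup>2 + 2 * (?g \<omega>)\<^sup>2"])
       (use ix ig a_le in \<open>auto intro!: AE_I2\<close>)
  have iale: "(\<integral>\<omega>. (a \<omega>)\<^sup>2 \<partial>M) \<le> (2*C + 2*(1+d)^2) * e^2"
  proof -
    have "(\<integral>\<omega>. (a \<omega>)\<^sup>2 \<partial>M) \<le> (\<integral>\<omega>. 2 * (?x \<omega>)\<^sup>2 + 2 * (?g \<omega>)\<^sup>2 \<partial>M)"
      using ia ix ig a_le by (intro integral_mono) auto
    also have "\<dots> = 2 * (\<integral>\<omega>. (?x \<omega>)\<^sup>2 \<partial>M) + 2 * (\<integral>\<omega>. (?g \<omega>)\<^sup>2 \<partial>M)"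
      using ix ig by simp
    also have "\<dots> \<le> 2 * (C * e\<^sup>2) + 2 * ((1+d)*e)^2" using ixle igle by linarith
    finally show ?thesis by (simp add: algebra_simps power2_eq_square)
  qed
  have iD: "integrable M (\<lambda>\<omega>. (D N \<omega>)\<^sup>2)" and iDle: "(\<integral>\<omega>. (D N \<omega>)\<^sup>2 \<partial>M) \<le> N * ((2*C + 2*(1+d)^2) * e^2)"
    using Suc.IH by auto
  have fx_le: "norm (f \<omega> * ?x \<omega>) \<le> (D N \<omega>)\<^sup>2 + (?x \<omega>)\<^sup>2" if "\<omega> \<in> space M" for \<omega>
  proof -
    have "(f \<omega>)\<^sup>2 \<le> (D N \<omega>)\<^sup>2" using z01[OF that] unfolding f_def by auto
    moreover have "\<bar>f \<omega> * ?x \<omega>\<bar> \<le> (f \<omega>)\<^sup>2 + (?x \<omega>)\<^sup>2"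
    proof -
      have eq: "(f \<omega>)\<^sup>2 + (?x \<omega>)\<^sup>2 - 2 * \<bar>f \<omega> * ?x \<omega>\<bar> = (\<bar>f \<omega>\<bar> - \<bar>?x \<omega>\<bar>)\<^sup>2"
        by (simp add: power2_eq_square algebra_simps abs_mult)
      have "0 \<le> (\<bar>f \<omega>\<bar> - \<bar>?x \<omega>\<bar>)\<^sup>2" by simp
      moreover have "0 \<le> \<bar>f \<omega> * ?x \<omega>\<bar>" by simp
      ultimately show ?thesis using eq by linarith
    qed
    ultimately show ?thesis by simp
  qed
  have ifx: "integrable M (\<lambda>\<omega>. f \<omega> * ?x \<omega>)"
    by (rule Bochner_Integration.integrable_bound[of _ "\<lambda>\<omega>. (D N \<omega>)\<^sup>2 + (?x \<omega>)\<^sup>2"])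
       (use iD ix fx_le in \<open>auto intro!: AE_I2\<close>)
  have ifg: "integrable M (\<lambda>\<omega>. f \<omega> * ?g \<omega>)" and eqfg: "(\<integral>\<omega>. f \<omega> * ?g \<omega> \<partial>M) = (\<integral>\<omega>. f \<omega> * ?x \<omega> \<partial>M)"
    using S.real_cond_exp_intg[OF ifx fF] unfolding g_def by auto
  have Deq: "(D (Suc N) \<omega>)\<^sup>2 = (D N \<omega>)\<^sup>2 + 2 * (f \<omega> * ?x \<omega>) - 2 * (f \<omega> * ?g \<omega>) + (a \<omega>)\<^sup>2" for \<omega>
    unfolding D_def a_def f_def by (simp add: power2_eq_square algebra_simps)
  have iS: "integrable M (\<lambda>\<omega>. (D (Suc N) \<omega>)\<^sup>2)" unfolding Deq using iD ifx ifg ia by auto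
  have "(\<integral>\<omega>. (D (Suc N) \<omega>)\<^sup>2 \<partial>M) = (\<integral>\<omega>. (D N \<omega>)\<^sup>2 \<partial>M) + 2 * (\<integral>\<omega>. f \<omega> * ?x \<omega> \<partial>M) - 2 * (\<integral>\<omega>. f \<omega> * ?g \<omega> \<partial>M) + (\<integral>\<omega>. (a \<omega>)\<^sup>2 \<partial>M)"
    unfolding Deq using iD ifx ifg ia by simp
  also have "\<dots> = (\<integral>\<omega>. (D N \<omega>)\<^sup>2 \<partial>M) + (\<integral>\<omega>. (a \<omega>)\<^sup>2 \<partial>M)" using eqfg by simp
  also have "\<dots> \<le> N * ((2*C + 2*(1+d)^2) * e^2) + (2*C + 2*(1+d)^2) * e^2" using iDle iale by linarith
  finally show ?case using iS by (simp add: algebra_simps)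
qed

lemma part2:
  fixes N :: nat and e r d C t \<eta> :: real
  assumes e: "e > 0" and r: "r > 0" and d: "0 < d" "d \<le> 1/2" "(1+d) * r \<le> 1/2" and C: "C \<ge> 0"
    and pl: "\<And>n. (1-d) * r \<le> p n" and pu: "\<And>n. p n \<le> (1+d) * r"
    and gA: "\<And>n. AE \<omega> in M. \<bar>g n \<omega> / e - 1\<bar> < d"
    and sec: "\<And>n. AE \<omega> in M. nn_cond_exp M (F n) (\<lambda>\<omega>. ennreal ((\<xi> (Suc n) \<omega>)\<^sup>2)) \<omega> \<le> ennreal (C * e\<^sup>2)"
    and t: "t \<ge> 0" and \<eta>: "\<eta> > 0"
  shows "\<bar>prob {\<omega>\<in>space M. t \<le> r / e * (\<Sum>n. \<xi> (Suc n) \<omega> * \<zeta> n \<omega>)} - exp (-t)\<bar>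
     \<le> \<eta> + 4 * d * (t + \<eta>) + 16 * (t + \<eta>) * r + r + (exp (-((1-d) * r * N)) + N * (2 * C + 2 * (1+d)^2) * r^2 / \<eta>^2)"
proof -
  define lam where "lam = \<eta> * e / r"
  have lam: "lam > 0" using e r \<eta> by (simp add: lam_def)
  define S where "S \<omega> = (\<Sum>n. \<xi> (Suc n) \<omega> * \<zeta> n \<omega>)" for \<omega>
  define A where "A = {\<omega>\<in>space M. t \<le> r / e * S \<omega>}"
  define E where "E s = {\<omega>\<in>space M. ennreal s \<le> ennreal r * ennreal_of_enat (first_zero \<zeta> \<omega>)}" for s
  define G where "G = {\<omega>\<in>space M. \<zeta> N \<omega> = 0 \<and> \<bar>D N \<omega>\<bar> < lam \<and> (\<forall>n. \<bar>g n \<omega> / e - 1\<bar> < d)}"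
  define c where "c = 2 * C + 2 * (1+d)^2"
  have c0: "c \<ge> 0" unfolding c_def using C by simp
  have Am: "A \<in> sets M" unfolding A_def S_def by measurable
  have Gm: "G \<in> sets M" unfolding G_def by measurable
  have Em: "E s \<in> sets M" if s0: "s > 0" for s :: real
  proof -
    have eq: "E s = {\<omega>\<in>space M. \<zeta> (nat \<lceil>s / r\<rceil> - 1) \<omega> = 1}" unfolding E_def
      by (rule K_event) (use r s0 in auto)
    have "{\<omega>\<in>space M. \<zeta> (nat \<lceil>s / r\<rceil> - 1) \<omega> = 1} \<in> sets M" by measurable
    then show ?thesis unfolding eq .
  qed
  have gb: "AE \<omega> in M. \<bar>g n \<omega>\<bar> \<le> (1+d)*e" for n
    using gA[of n] proof eventually_elim
    case (elim \<omega>)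
    then have "g n \<omega> / e < 1 + d" "1 - d < g n \<omega> / e" by auto
    then have "g n \<omega> < (1+d)*e" "(1-d)*e < g n \<omega>" using e by (simp_all add: field_simps)
    moreover have "0 \<le> (1-d)*e" using d e by simp
    ultimately show ?case by simp
  qed
  have Dsq: "integrable M (\<lambda>\<omega>. (D N \<omega>)\<^sup>2)" "(\<integral>\<omega>. (D N \<omega>)\<^sup>2 \<partial>M) \<le> N * (c * e\<^sup>2)"
    using D_sq[OF e less_imp_le[OF d(1)] C gb sec] unfolding c_def by auto
  have PD: "prob {\<omega>\<in>space M. lam \<le> \<bar>D N \<omega>\<bar>} \<le> N * c * r^2 / \<eta>^2"
  proof -
    have "prob {\<omega>\<in>space M. lam \<le> \<bar>D N \<omega>\<bar>} \<le> (\<integral>\<omega>. (D N \<omega>)^2 \<partial>M) / lam\<^sup>2"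
      by (rule second_moment_method) (use Dsq lam in auto)
    also have "\<dots> \<le> N * (c * e\<^sup>2) / lam\<^sup>2" using Dsq by (intro divide_right_mono) auto
    also have "\<dots> = N * c * r^2 / \<eta>^2" unfolding lam_def using e r \<eta> by (simp add: field_simps power2_eq_square)
    finally show ?thesis .
  qed
  have PZ: "prob {\<omega>\<in>space M. \<not> (\<forall>n. \<bar>g n \<omega> / e - 1\<bar> < d)} = 0"
  proof -
    have ae: "AE \<omega> in M. \<forall>n. \<bar>g n \<omega> / e - 1\<bar> < d" using gA by (simp add: AE_all_countable)
    have Zm: "{\<omega>\<in>space M. \<not> (\<forall>n. \<bar>g n \<omega> / e - 1\<bar> < d)} \<in> sets M" by measurable
    then have "emeasure M {\<omega>\<in>space M. \<not> (\<forall>n. \<bar>g n \<omega> / e - 1\<bar> < d)} = 0"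
      using AE_iff_measurable[OF Zm refl] ae by simp
    then show ?thesis by (simp add: measure_def)
  qed
  have dr: "(1-d) * r \<le> (1+d) * r" using d r by (intro mult_right_mono) auto
  have PN: "q N \<le> exp (-((1-d) * r * N))"
  proof -
    have "q N \<le> (1 - (1-d) * r)^N" using q_bounds[OF pl pu] d by auto
    also have "\<dots> \<le> exp (-((1-d) * r))^N"
      using exp_ge_add_one_self[of "-((1-d) * r)"] dr d by (intro power_mono) auto
    also have "\<dots> = exp (-((1-d) * r * N))" by (simp flip: exp_of_nat_mult add: algebra_simps)
    finally show ?thesis .
  qed
  define B where "B = exp (-((1-d) * r * N)) + N * c * r^2 / \<eta>^2"
  have B0: "B \<ge> 0" unfolding B_def using c0 by simp
  have PB: "prob (space M - G) \<le> B"
  proof -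
    let ?X = "{\<omega>\<in>space M. \<zeta> N \<omega> = 1}" and ?Y = "{\<omega>\<in>space M. lam \<le> \<bar>D N \<omega>\<bar>}"
      and ?Z = "{\<omega>\<in>space M. \<not> (\<forall>n. \<bar>g n \<omega> / e - 1\<bar> < d)}"
    have [simp]: "?X \<in> sets M" "?Y \<in> sets M" "?Z \<in> sets M" by measurable
    have "space M - G \<subseteq> ?X \<union> ?Y \<union> ?Z"
    proof
      fix \<omega> assume a: "\<omega> \<in> space M - G"
      then have w: "\<omega> \<in> space M" by simp
      show "\<omega> \<in> ?X \<union> ?Y \<union> ?Z"
        using a zeta01[OF w, of N] unfolding G_def by auto
    qed
    then have "prob (space M - G) \<le> prob (?X \<union> ?Y \<union> ?Z)" by (intro finite_measure_mono) auto
    also have "\<dots> \<le> prob (?X \<union> ?Y) + prob ?Z" by (rule measure_Un_le) auto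
    also have "\<dots> \<le> prob ?X + prob ?Y + prob ?Z"
      using measure_Un_le[of ?X M ?Y] by simp
    also have "\<dots> \<le> B" using PN PD PZ unfolding B_def q_def by simp
    finally show ?thesis .
  qed
  have key: "\<exists>k. first_zero \<zeta> \<omega> = enat k \<and> (1-d) * r * k - \<eta> \<le> r / e * S \<omega> \<and> r / e * S \<omega> \<le> (1+d) * r * k + \<eta>"
    if "\<omega> \<in> G" for \<omega>
  proof -
    from that have w: "\<omega> \<in> space M" and zN: "\<zeta> N \<omega> = 0" and Dl: "\<bar>D N \<omega>\<bar> < lam"
      and gw: "\<And>n. \<bar>g n \<omega> / e - 1\<bar> < d" unfolding G_def by auto
    obtain k where kN: "k \<le> N" and fk: "first_zero \<zeta> \<omega> = enat k" and lt: "\<forall>n<k. \<zeta> n \<omega> \<noteq> 0"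
      and zk: "\<zeta> k \<omega> = 0"
      using first_zero_finite[of \<zeta> N \<omega>, OF zN] by blast
    have z1: "\<zeta> n \<omega> = 1" if "n < k" for n using lt that zeta01[OF w, of n] by auto
    have z0: "\<zeta> n \<omega> = 0" if "k \<le> n" for n using absorb[OF w that zk] .
    have Seq: "S \<omega> = (\<Sum>n<k. \<xi> (Suc n) \<omega>)"
    proof -
      have "S \<omega> = (\<Sum>n<k. \<xi> (Suc n) \<omega> * \<zeta> n \<omega>)" unfolding S_def
        by (rule suminf_finite) (auto simp: z0 not_less)
      also have "\<dots> = (\<Sum>n<k. \<xi> (Suc n) \<omega>)" by (rule sum.cong) (auto simp: z1)
      finally show ?thesis .
    qed
    have Deq: "D N \<omega> = (\<Sum>n<k. \<xi> (Suc n) \<omega> - g n \<omega>)"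
      unfolding D_def
      by (rule sum.mono_neutral_cong_right) (use kN in \<open>auto simp: z0 z1 not_less\<close>)
    have gs: "(1-d) * e < g n \<omega> \<and> g n \<omega> < (1+d) * e" for n
    proof -
      have "g n \<omega> / e < 1 + d" "1 - d < g n \<omega> / e" using gw[of n] by auto
      then show ?thesis using e by (simp add: field_simps)
    qed
    have G1: "(\<Sum>n<k. g n \<omega>) \<le> k * ((1+d)*e)"
      using sum_bounded_above[of "{..<k}" "\<lambda>n. g n \<omega>" "(1+d)*e"] gs by (auto intro: less_imp_le)
    have G2: "k * ((1-d)*e) \<le> (\<Sum>n<k. g n \<omega>)"
      using sum_bounded_below[of "{..<k}" "(1-d)*e" "\<lambda>n. g n \<omega>"] gs by (auto intro: less_imp_le)
    have SD: "S \<omega> = D N \<omega> + (\<Sum>n<k. g n \<omega>)" unfolding Seq Deq by (simp add: sum_subtractf)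
    have re: "r / e > 0" using r e by simp
    have split: "r / e * S \<omega> = r / e * D N \<omega> + r / e * (\<Sum>n<k. g n \<omega>)" unfolding SD by (simp add: algebra_simps)
    have "\<bar>r / e * D N \<omega>\<bar> = r / e * \<bar>D N \<omega>\<bar>" using r e by (simp add: abs_mult)
    also have "\<dots> < r / e * lam" using Dl re by (intro mult_strict_left_mono) auto
    also have "r / e * lam = \<eta>" unfolding lam_def using r e by simp
    finally have Dabs: "\<bar>r / e * D N \<omega>\<bar> < \<eta>" .
    have "r / e * (\<Sum>n<k. g n \<omega>) \<le> r / e * (k * ((1+d)*e))" using G1 re by (intro mult_left_mono) auto
    also have "\<dots> = (1+d) * r * k" using e by (simp add: field_simps)
    finally have H1: "r / e * (\<Sum>n<k. g n \<omega>) \<le> (1+d) * r * k" .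
    have "(1-d) * r * k = r / e * (k * ((1-d)*e))" using e by (simp add: field_simps)
    also have "\<dots> \<le> r / e * (\<Sum>n<k. g n \<omega>)" using G2 re by (intro mult_left_mono) auto
    finally have H2: "(1-d) * r * k \<le> r / e * (\<Sum>n<k. g n \<omega>)" .
    have D2: "r / e * D N \<omega> < \<eta> \<and> - (r / e * D N \<omega>) < \<eta>" using abs_less_iff[THEN iffD1, OF Dabs] .
    have "(1-d) * r * k - \<eta> \<le> r / e * S \<omega> \<and> r / e * S \<omega> \<le> (1+d) * r * k + \<eta>"
      using split D2 H1 H2 by linarith
    then show ?thesis using fk by blast
  qed
  have P1: "\<bar>prob (E s) - exp (-s)\<bar> \<le> s * d + 8 * s * r + r" if "s \<ge> 0" for s
    unfolding E_def by (rule part1) (use r d pl pu that in auto)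
  have up: "prob A - exp (-t) \<le> \<eta> + 4 * d * (t + \<eta>) + 16 * (t + \<eta>) * r + r + B"
  proof (cases "t \<le> \<eta>")
    case True
    have "prob A \<le> 1" by simp
    moreover have "1 - exp (-t) \<le> t" using exp_lip[of 0 t] t by simp
    moreover have "0 \<le> 4 * d * (t + \<eta>)" "0 \<le> 16 * (t + \<eta>) * r" using d t \<eta> r by auto
    ultimately show ?thesis using True B0 r by linarith
  next
    case False
    define s1 where "s1 = (t - \<eta>) / (1 + d)"
    have s1: "s1 > 0" using False d by (simp add: s1_def)
    have s1t: "s1 \<le> t"
    proof -
      have "t - \<eta> \<le> t * (1 + d)" using t d \<eta> by (simp add: algebra_simps)
      then show ?thesis unfolding s1_def using d by (simp add: pos_divide_le_eq)
    qed
    have ts1: "t - s1 \<le> \<eta> + d * t"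
    proof -
      have eq: "t - s1 = (d * t + \<eta>) / (1 + d)" unfolding s1_def using d by (simp add: field_simps)
      have "d * t + \<eta> \<le> (d * t + \<eta>) * (1 + d)" using d t \<eta> by (simp add: algebra_simps)
      then have "(d * t + \<eta>) / (1 + d) \<le> d * t + \<eta>" using d by (simp add: pos_divide_le_eq)
      then show ?thesis unfolding eq by simp
    qed
    have sub: "A \<subseteq> E s1 \<union> (space M - G)"
    proof
      fix \<omega> assume "\<omega> \<in> A"
      then have w: "\<omega> \<in> space M" and tA: "t \<le> r / e * S \<omega>" unfolding A_def by auto
      show "\<omega> \<in> E s1 \<union> (space M - G)"
      proof (cases "\<omega> \<in> G")
        case True
        then obtain k where fk: "first_zero \<zeta> \<omega> = enat k" and hi: "r / e * S \<omega> \<le> (1+d) * r * k + \<eta>"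
          using key by blast
        have "t - \<eta> \<le> (r * k) * (1+d)" using tA hi by (simp add: algebra_simps)
        then have "s1 \<le> r * k" unfolding s1_def using d by (simp add: pos_divide_le_eq)
        then have "ennreal s1 \<le> ennreal r * ennreal_of_enat (first_zero \<zeta> \<omega>)"
          unfolding fk using ennreal_mult_enat_iff[of r s1 k] r by simp
        then show ?thesis using w unfolding E_def by simp
      qed (use w in simp)
    qed
    have "prob A \<le> prob (E s1 \<union> (space M - G))" using sub Em[OF s1] Gm by (intro finite_measure_mono) auto
    also have "\<dots> \<le> prob (E s1) + prob (space M - G)" using Em[OF s1] Gm by (intro measure_Un_le) auto
    finally have a1: "prob A \<le> prob (E s1) + B" using PB by linarith
    have a2: "prob (E s1) \<le> exp (-s1) + (s1 * d + 8 * s1 * r + r)" using P1[of s1] s1 by (simp add: abs_le_iff)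
    have a3: "exp (-s1) - exp (-t) \<le> t - s1" using exp_lip[of s1 t] s1 s1t by simp
    have a4: "s1 * d \<le> t * d" using s1t d by (intro mult_right_mono) auto
    have a5: "8 * s1 * r \<le> 8 * t * r" using s1t r by (intro mult_right_mono) auto
    have a6: "d * t + t * d \<le> 4 * d * (t + \<eta>)" using d t \<eta> by (simp add: algebra_simps)
    have a7: "8 * t * r \<le> 16 * (t + \<eta>) * r" using t \<eta> r by (simp add: algebra_simps)
    show ?thesis using a1 a2 a3 a4 a5 a6 a7 ts1 by linarith
  qed
  have lo: "exp (-t) - prob A \<le> \<eta> + 4 * d * (t + \<eta>) + 16 * (t + \<eta>) * r + r + B"
  proof -
    define s2 where "s2 = (t + \<eta>) / (1 - d)"
    have d1: "1 - d > 0" using d by simp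
    have s2: "s2 > 0" using d1 t \<eta> by (simp add: s2_def)
    have ts2: "t \<le> s2"
    proof -
      have "t * (1 - d) \<le> t + \<eta>" using t d \<eta> by (simp add: algebra_simps)
      then show ?thesis unfolding s2_def using d1 by (simp add: pos_le_divide_eq)
    qed
    have s2u: "s2 \<le> (t + \<eta>) * (1 + 2 * d)"
    proof -
      have "0 \<le> (t + \<eta>) * (d * (1 - 2 * d))" using t \<eta> d by (intro mult_nonneg_nonneg) auto
      then have "t + \<eta> \<le> (t + \<eta>) * (1 + 2 * d) * (1 - d)" by (simp add: algebra_simps)
      then show ?thesis unfolding s2_def using d1 by (simp add: pos_divide_le_eq)
    qed
    have s2v: "s2 \<le> 2 * (t + \<eta>)"
    proof -
      have "(t + \<eta>) * (1 + 2 * d) \<le> (t + \<eta>) * 2" using t \<eta> d by (intro mult_left_mono) auto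
      then show ?thesis using s2u by simp
    qed
    have sub: "E s2 \<subseteq> A \<union> (space M - G)"
    proof
      fix \<omega> assume "\<omega> \<in> E s2"
      then have w: "\<omega> \<in> space M" and eE: "ennreal s2 \<le> ennreal r * ennreal_of_enat (first_zero \<zeta> \<omega>)"
        unfolding E_def by auto
      show "\<omega> \<in> A \<union> (space M - G)"
      proof (cases "\<omega> \<in> G")
        case True
        then obtain k where fk: "first_zero \<zeta> \<omega> = enat k" and lw: "(1-d) * r * k - \<eta> \<le> r / e * S \<omega>"
          using key by blast
        have "s2 \<le> r * k" using eE unfolding fk using ennreal_mult_enat_iff[of r s2 k] r by simp
        then have "t + \<eta> \<le> (r * k) * (1 - d)" unfolding s2_def using d1 by (simp add: pos_divide_le_eq)
        then have "t \<le> r / e * S \<omega>" using lw by (simp add: algebra_simps)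
        then show ?thesis using w unfolding A_def by simp
      qed (use w in simp)
    qed
    have "prob (E s2) \<le> prob (A \<union> (space M - G))" using sub Am Gm by (intro finite_measure_mono) auto
    also have "\<dots> \<le> prob A + prob (space M - G)" using Am Gm by (intro measure_Un_le) auto
    finally have a1: "prob (E s2) \<le> prob A + B" using PB by linarith
    have a2: "exp (-s2) - (s2 * d + 8 * s2 * r + r) \<le> prob (E s2)" using P1[of s2] s2 by (simp add: abs_le_iff)
    have a3: "exp (-t) - exp (-s2) \<le> s2 - t" using exp_lip[of t s2] t ts2 by simp
    have a4: "s2 * d \<le> 2 * (t + \<eta>) * d" using s2v d by (intro mult_right_mono) auto
    have a5: "8 * s2 * r \<le> 16 * (t + \<eta>) * r" using s2v r by (simp add: mult_right_mono)
    have a6: "s2 - t \<le> \<eta> + 2 * d * (t + \<eta>)" using s2u by (simp add: algebra_simps)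
    have a7: "2 * d * (t + \<eta>) + 2 * (t + \<eta>) * d = 4 * d * (t + \<eta>)" by (simp add: algebra_simps)
    show ?thesis using a1 a2 a3 a4 a5 a6 a7 by linarith
  qed
  have "\<bar>prob A - exp (-t)\<bar> \<le> \<eta> + 4 * d * (t + \<eta>) + 16 * (t + \<eta>) * r + r + B"
    using up lo by (simp add: abs_le_iff)
  then show ?thesis unfolding A_def S_def B_def c_def .
qed

end

theorem lemma6p4:
  fixes S :: "'b set"
    and M :: "'b \<Rightarrow> real \<Rightarrow> 'a measure"
    and F :: "'b \<Rightarrow> real \<Rightarrow> nat \<Rightarrow> 'a measure"
    and \<xi> \<zeta> :: "'b \<Rightarrow> real \<Rightarrow> nat \<Rightarrow> 'a \<Rightarrow> real"
    and e r :: "real \<Rightarrow> real"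
  assumes prob: "\<And>x \<epsilon>. x \<in> S \<Longrightarrow> \<epsilon> > 0 \<Longrightarrow> prob_space (M x \<epsilon>)"
    and subalg: "\<And>x \<epsilon> n. x \<in> S \<Longrightarrow> \<epsilon> > 0 \<Longrightarrow> subalgebra (M x \<epsilon>) (F x \<epsilon> n)"
    and filt: "\<And>x \<epsilon> n m. x \<in> S \<Longrightarrow> \<epsilon> > 0 \<Longrightarrow> n \<le> m \<Longrightarrow> sets (F x \<epsilon> n) \<subseteq> sets (F x \<epsilon> m)"
    and adapt_xi: "\<And>x \<epsilon> n. x \<in> S \<Longrightarrow> \<epsilon> > 0 \<Longrightarrow> \<xi> x \<epsilon> n \<in> borel_measurable (F x \<epsilon> n)"
    and adapt_zeta: "\<And>x \<epsilon> n. x \<in> S \<Longrightarrow> \<epsilon> > 0 \<Longrightarrow> \<zeta> x \<epsilon> n \<in> borel_measurable (F x \<epsilon> n)"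
    and xi0: "\<And>x \<epsilon> \<omega>. x \<in> S \<Longrightarrow> \<epsilon> > 0 \<Longrightarrow> \<omega> \<in> space (M x \<epsilon>) \<Longrightarrow> \<xi> x \<epsilon> 0 \<omega> = 0"
    and e_pos: "\<And>\<epsilon>. \<epsilon> > 0 \<Longrightarrow> e \<epsilon> > 0"
    and mean: "\<And>\<delta>. \<delta> > 0 \<Longrightarrow> \<exists>\<epsilon>0>0. \<forall>\<epsilon>. 0 < \<epsilon> \<and> \<epsilon> < \<epsilon>0 \<longrightarrow> (\<forall>x\<in>S. \<forall>n.
        AE \<omega> in M x \<epsilon>. \<bar>real_cond_exp (M x \<epsilon>) (F x \<epsilon> n) (\<xi> x \<epsilon> (Suc n)) \<omega> / e \<epsilon> - 1\<bar> < \<delta>)"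
    and second: "\<exists>C. \<exists>\<epsilon>0>0. \<forall>\<epsilon>. 0 < \<epsilon> \<and> \<epsilon> < \<epsilon>0 \<longrightarrow> (\<forall>x\<in>S. \<forall>n.
        AE \<omega> in M x \<epsilon>. nn_cond_exp (M x \<epsilon>) (F x \<epsilon> n) (\<lambda>\<omega>. ennreal ((\<xi> x \<epsilon> (Suc n) \<omega>)\<^sup>2)) \<omega>
            \<le> ennreal (C * (e \<epsilon>)\<^sup>2))"
    and zeta01: "\<And>x \<epsilon> n \<omega>. x \<in> S \<Longrightarrow> \<epsilon> > 0 \<Longrightarrow> \<omega> \<in> space (M x \<epsilon>) \<Longrightarrow> \<zeta> x \<epsilon> n \<omega> \<in> {0, 1}"
    and zeta0: "\<And>x \<epsilon> \<omega>. x \<in> S \<Longrightarrow> \<epsilon> > 0 \<Longrightarrow> \<omega> \<in> space (M x \<epsilon>) \<Longrightarrow> \<zeta> x \<epsilon> 0 \<omega> = 1"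
    and absorb: "\<And>x \<epsilon> n m \<omega>. x \<in> S \<Longrightarrow> \<epsilon> > 0 \<Longrightarrow> \<omega> \<in> space (M x \<epsilon>) \<Longrightarrow> n \<le> m \<Longrightarrow>
        \<zeta> x \<epsilon> n \<omega> = 0 \<Longrightarrow> \<zeta> x \<epsilon> m \<omega> = 0"
    and r_pos: "\<And>\<epsilon>. \<epsilon> > 0 \<Longrightarrow> r \<epsilon> > 0"
    and r_lim: "(r \<longlongrightarrow> 0) (at_right 0)"
    and kill: "\<And>\<delta>. \<delta> > 0 \<Longrightarrow> \<exists>\<epsilon>0>0. \<forall>\<epsilon>. 0 < \<epsilon> \<and> \<epsilon> < \<epsilon>0 \<longrightarrow> (\<forall>x\<in>S. \<forall>n.
        \<bar>cond_prob (M x \<epsilon>) (\<lambda>\<omega>. \<zeta> x \<epsilon> (Suc n) \<omega> = 0) (\<lambda>\<omega>. \<zeta> x \<epsilon> n \<omega> = 1) / r \<epsilon> - 1\<bar> < \<delta>)"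
  shows "\<forall>t\<ge>0. \<forall>\<delta>>0. \<exists>\<epsilon>0>0. \<forall>\<epsilon>. 0 < \<epsilon> \<and> \<epsilon> < \<epsilon>0 \<longrightarrow> (\<forall>x\<in>S.
           \<bar>measure (M x \<epsilon>) {\<omega> \<in> space (M x \<epsilon>).
               ennreal t \<le> ennreal (r \<epsilon>) * ennreal_of_enat (first_zero (\<zeta> x \<epsilon>) \<omega>)} - exp (- t)\<bar> < \<delta>
         \<and> \<bar>measure (M x \<epsilon>) {\<omega> \<in> space (M x \<epsilon>).
               t \<le> r \<epsilon> / e \<epsilon> * (\<Sum>n. \<xi> x \<epsilon> (Suc n) \<omega> * \<zeta> x \<epsilon> n \<omega>)} - exp (- t)\<bar> < \<delta>)"
proof (intro allI impI)
  fix t \<delta> :: real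
  assume t: "t \<ge> 0" and \<delta>: "\<delta> > 0"
  obtain C0 \<epsilon>C where \<epsilon>C: "\<epsilon>C > 0" and secC: "\<forall>\<epsilon>. 0 < \<epsilon> \<and> \<epsilon> < \<epsilon>C \<longrightarrow> (\<forall>x\<in>S. \<forall>n.
        AE \<omega> in M x \<epsilon>. nn_cond_exp (M x \<epsilon>) (F x \<epsilon> n) (\<lambda>\<omega>. ennreal ((\<xi> x \<epsilon> (Suc n) \<omega>)\<^sup>2)) \<omega>
            \<le> ennreal (C0 * (e \<epsilon>)\<^sup>2))"
    using second by blast
  define C where "C = max C0 0"
  define T where "T = t + 1"
  define \<eta> where "\<eta> = min 1 (\<delta> / 6)"
  define d where "d = min (1/2) (\<delta> / (24 * T))"
  define L where "L = 2 * max 0 (ln (6 / \<delta>))"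
  define c where "c = 2 * C + 2 * (1+d)^2"
  define \<rho> where "\<rho> = min (1/4) (min (\<delta> / (6 * (16 * T + 1))) (\<delta> * \<eta>^2 / (6 * c * (L + 1))))"
  have C: "C \<ge> 0" "C0 \<le> C" unfolding C_def by auto
  have T: "T \<ge> 1" "t \<le> T" unfolding T_def using t by auto
  have \<eta>: "\<eta> > 0" "\<eta> \<le> 1" "\<eta> \<le> \<delta> / 6" unfolding \<eta>_def using \<delta> by auto
  have d: "d > 0" "d \<le> 1/2" "d \<le> \<delta> / (24 * T)" unfolding d_def using \<delta> T by auto
  have L: "L \<ge> 0" unfolding L_def by simp
  have c: "c > 0"
  proof -
    have "0 < (1+d)^2" using d(1) by simp
    then show ?thesis unfolding c_def using C(1) by linarith
  qed
  have \<rho>1: "\<rho> > 0"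
  proof -
    have "\<delta> / (6 * (16 * T + 1)) > 0" using \<delta> T by simp
    moreover have "\<delta> * \<eta>^2 / (6 * c * (L + 1)) > 0" using \<delta> \<eta> c L by simp
    ultimately show ?thesis unfolding \<rho>_def by simp
  qed
  have \<rho>2: "\<rho> \<le> 1/4" unfolding \<rho>_def by (rule min.cobounded1)
  have \<rho>3: "\<rho> \<le> \<delta> / (6 * (16 * T + 1))" unfolding \<rho>_def
    by (rule order_trans[OF min.cobounded2 min.cobounded1])
  have \<rho>4: "\<rho> \<le> \<delta> * \<eta>^2 / (6 * c * (L + 1))" unfolding \<rho>_def
    by (rule order_trans[OF min.cobounded2 min.cobounded2])
  note \<rho> = \<rho>1 \<rho>2 \<rho>3 \<rho>4
  obtain \<epsilon>k where \<epsilon>k: "\<epsilon>k > 0" and killk: "\<forall>\<epsilon>. 0 < \<epsilon> \<and> \<epsilon> < \<epsilon>k \<longrightarrow> (\<forall>x\<in>S. \<forall>n.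
        \<bar>cond_prob (M x \<epsilon>) (\<lambda>\<omega>. \<zeta> x \<epsilon> (Suc n) \<omega> = 0) (\<lambda>\<omega>. \<zeta> x \<epsilon> n \<omega> = 1) / r \<epsilon> - 1\<bar> < d)"
    using kill[OF d(1)] by blast
  obtain \<epsilon>m where \<epsilon>m: "\<epsilon>m > 0" and meanm: "\<forall>\<epsilon>. 0 < \<epsilon> \<and> \<epsilon> < \<epsilon>m \<longrightarrow> (\<forall>x\<in>S. \<forall>n.
        AE \<omega> in M x \<epsilon>. \<bar>real_cond_exp (M x \<epsilon>) (F x \<epsilon> n) (\<xi> x \<epsilon> (Suc n)) \<omega> / e \<epsilon> - 1\<bar> < d)"
    using mean[OF d(1)] by blast
  have "eventually (\<lambda>\<epsilon>. r \<epsilon> < \<rho>) (at_right 0)"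
    using order_tendstoD(2)[OF r_lim \<rho>(1)] .
  then obtain \<epsilon>r where \<epsilon>r: "\<epsilon>r > 0" and rr: "\<And>\<epsilon>. 0 < \<epsilon> \<Longrightarrow> \<epsilon> < \<epsilon>r \<Longrightarrow> r \<epsilon> < \<rho>"
    unfolding eventually_at_right_field by blast
  define \<epsilon>0 where "\<epsilon>0 = min (min \<epsilon>C \<epsilon>k) (min \<epsilon>m \<epsilon>r)"
  have \<epsilon>0: "\<epsilon>0 > 0" unfolding \<epsilon>0_def using \<epsilon>C \<epsilon>k \<epsilon>m \<epsilon>r by simp
  show "\<exists>\<epsilon>0>0. \<forall>\<epsilon>. 0 < \<epsilon> \<and> \<epsilon> < \<epsilon>0 \<longrightarrow> (\<forall>x\<in>S.
           \<bar>measure (M x \<epsilon>) {\<omega> \<in> space (M x \<epsilon>).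
               ennreal t \<le> ennreal (r \<epsilon>) * ennreal_of_enat (first_zero (\<zeta> x \<epsilon>) \<omega>)} - exp (- t)\<bar> < \<delta>
         \<and> \<bar>measure (M x \<epsilon>) {\<omega> \<in> space (M x \<epsilon>).
               t \<le> r \<epsilon> / e \<epsilon> * (\<Sum>n. \<xi> x \<epsilon> (Suc n) \<omega> * \<zeta> x \<epsilon> n \<omega>)} - exp (- t)\<bar> < \<delta>)"
  proof (intro exI[of _ \<epsilon>0] conjI \<epsilon>0 allI impI ballI)
    fix \<epsilon> x assume \<epsilon>: "0 < \<epsilon> \<and> \<epsilon> < \<epsilon>0" and x: "x \<in> S"
    have \<epsilon>p: "\<epsilon> > 0" using \<epsilon> by simp
    have \<epsilon>s: "\<epsilon> < \<epsilon>C" "\<epsilon> < \<epsilon>k" "\<epsilon> < \<epsilon>m" "\<epsilon> < \<epsilon>r" using \<epsilon> unfolding \<epsilon>0_def by auto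
    have ks: "kset (M x \<epsilon>) (F x \<epsilon>) (\<xi> x \<epsilon>) (\<zeta> x \<epsilon>)"
      by (rule kset.intro[of "M x \<epsilon>" "F x \<epsilon>" "\<xi> x \<epsilon>" "\<zeta> x \<epsilon>", OF prob[OF x \<epsilon>p] kset_axioms.intro[of "M x \<epsilon>" "F x \<epsilon>" "\<xi> x \<epsilon>" "\<zeta> x \<epsilon>", OF subalg[OF x \<epsilon>p] filt[OF x \<epsilon>p]
          adapt_xi[OF x \<epsilon>p] adapt_zeta[OF x \<epsilon>p] zeta01[OF x \<epsilon>p] zeta0[OF x \<epsilon>p] absorb[OF x \<epsilon>p]]])
    interpret K: kset "M x \<epsilon>" "F x \<epsilon>" "\<xi> x \<epsilon>" "\<zeta> x \<epsilon>" by (rule ks)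
    have rp: "r \<epsilon> > 0" using r_pos[OF \<epsilon>p] .
    have ep: "e \<epsilon> > 0" using e_pos[OF \<epsilon>p] .
    have r\<rho>: "r \<epsilon> < \<rho>" using rr[OF \<epsilon>p \<epsilon>s(4)] .
    have pb: "(1-d) * r \<epsilon> \<le> K.p n \<and> K.p n \<le> (1+d) * r \<epsilon>" for n
    proof -
      have "\<bar>K.p n / r \<epsilon> - 1\<bar> < d" unfolding K.p_def using killk[rule_format, OF conjI[OF \<epsilon>p \<epsilon>s(2)] x] .
      then have "1 - d < K.p n / r \<epsilon>" "K.p n / r \<epsilon> < 1 + d" by auto
      then show ?thesis using rp by (simp add: field_simps)
    qed
    have gA: "AE \<omega> in M x \<epsilon>. \<bar>K.g n \<omega> / e \<epsilon> - 1\<bar> < d" for n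
      unfolding K.g_def using meanm[rule_format, OF conjI[OF \<epsilon>p \<epsilon>s(3)] x] .
    have secs: "AE \<omega> in M x \<epsilon>. nn_cond_exp (M x \<epsilon>) (F x \<epsilon> n) (\<lambda>\<omega>. ennreal ((\<xi> x \<epsilon> (Suc n) \<omega>)\<^sup>2)) \<omega>
            \<le> ennreal (C * (e \<epsilon>)\<^sup>2)" for n
    proof -
      have "AE \<omega> in M x \<epsilon>. nn_cond_exp (M x \<epsilon>) (F x \<epsilon> n) (\<lambda>\<omega>. ennreal ((\<xi> x \<epsilon> (Suc n) \<omega>)\<^sup>2)) \<omega>
            \<le> ennreal (C0 * (e \<epsilon>)\<^sup>2)" using secC[rule_format, OF conjI[OF \<epsilon>p \<epsilon>s(1)] x] .
      moreover have "ennreal (C0 * (e \<epsilon>)\<^sup>2) \<le> ennreal (C * (e \<epsilon>)\<^sup>2)"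
        using C by (intro ennreal_leI mult_right_mono) auto
      ultimately show ?thesis by (auto elim: order_trans)
    qed
    have r14: "r \<epsilon> \<le> 1/4" using r\<rho> \<rho> by linarith
    have dr: "(1+d) * r \<epsilon> \<le> 1/2"
    proof -
      have "(1+d) * r \<epsilon> \<le> 2 * (1/4)" using d r14 rp by (intro mult_mono) auto
      then show ?thesis by simp
    qed
    have rT: "(16 * T + 1) * r \<epsilon> \<le> \<delta> / 6"
    proof -
      have "(16 * T + 1) * r \<epsilon> \<le> (16 * T + 1) * (\<delta> / (6 * (16 * T + 1)))"
        using r\<rho> \<rho> T by (intro mult_left_mono) auto
      also have "\<dots> = \<delta> / 6" using T by (simp add: field_simps)
      finally show ?thesis .
    qed
    have tdT: "T * d \<le> \<delta> / 24"
    proof -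
      have "T * d \<le> T * (\<delta> / (24 * T))" using d T by (intro mult_left_mono) auto
      also have "\<dots> = \<delta> / 24" using T by (simp add: field_simps)
      finally show ?thesis .
    qed
    have P1: "\<bar>measure (M x \<epsilon>) {\<omega> \<in> space (M x \<epsilon>).
               ennreal t \<le> ennreal (r \<epsilon>) * ennreal_of_enat (first_zero (\<zeta> x \<epsilon>) \<omega>)} - exp (- t)\<bar>
        \<le> t * d + 8 * t * r \<epsilon> + r \<epsilon>"
      by (rule K.part1) (use rp d dr pb t in auto)
    have "t * d \<le> T * d" using T d by (intro mult_right_mono) auto
    moreover have "8 * t * r \<epsilon> + r \<epsilon> \<le> (16 * T + 1) * r \<epsilon>"
    proof -
      have "8 * t * r \<epsilon> \<le> 16 * T * r \<epsilon>" using T t rp by (intro mult_right_mono) auto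
      then show ?thesis by (simp add: algebra_simps)
    qed
    ultimately show "\<bar>measure (M x \<epsilon>) {\<omega> \<in> space (M x \<epsilon>).
               ennreal t \<le> ennreal (r \<epsilon>) * ennreal_of_enat (first_zero (\<zeta> x \<epsilon>) \<omega>)} - exp (- t)\<bar> < \<delta>"
      using P1 tdT rT \<delta> by linarith
    define N where "N = nat \<lceil>L / r \<epsilon>\<rceil>"
    have N1: "real N \<ge> L / r \<epsilon>" unfolding N_def by linarith
    have N2: "real N \<le> L / r \<epsilon> + 1"
    proof -
      have "0 \<le> L / r \<epsilon>" using L rp by simp
      then have "real N = of_int \<lceil>L / r \<epsilon>\<rceil>" unfolding N_def by simp
      also have "\<dots> \<le> L / r \<epsilon> + 1" by (rule of_int_ceiling_le_add_one)
      finally show ?thesis .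
    qed
    have P2: "\<bar>measure (M x \<epsilon>) {\<omega> \<in> space (M x \<epsilon>).
               t \<le> r \<epsilon> / e \<epsilon> * (\<Sum>n. \<xi> x \<epsilon> (Suc n) \<omega> * \<zeta> x \<epsilon> n \<omega>)} - exp (- t)\<bar>
      \<le> \<eta> + 4 * d * (t + \<eta>) + 16 * (t + \<eta>) * r \<epsilon> + r \<epsilon> + (exp (-((1-d) * r \<epsilon> * real N))
          + real N * (2 * C + 2 * (1+d)^2) * (r \<epsilon>)^2 / \<eta>^2)"
      by (rule K.part2) (use ep rp d dr C pb gA secs t \<eta> in auto)
    have e2: "4 * d * (t + \<eta>) \<le> \<delta> / 6"
    proof -
      have "t + \<eta> \<le> T" unfolding T_def using \<eta> by simp
      then have "4 * d * (t + \<eta>) \<le> 4 * d * T" using d by (intro mult_left_mono) auto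
      then show ?thesis using tdT by (simp add: algebra_simps)
    qed
    have e3: "16 * (t + \<eta>) * r \<epsilon> + r \<epsilon> \<le> \<delta> / 6"
    proof -
      have "t + \<eta> \<le> T" unfolding T_def using \<eta> by simp
      then have "16 * (t + \<eta>) * r \<epsilon> \<le> 16 * T * r \<epsilon>" using rp by (intro mult_right_mono) auto
      then show ?thesis using rT by (simp add: algebra_simps)
    qed
    have e4: "exp (-((1-d) * r \<epsilon> * real N)) \<le> \<delta> / 6"
    proof -
      have rN: "L \<le> r \<epsilon> * real N" using N1 rp by (simp add: field_simps)
      have "L / 2 \<le> (1/2) * (r \<epsilon> * real N)" using rN by simp
      also have "\<dots> \<le> (1-d) * (r \<epsilon> * real N)" using d rp by (intro mult_right_mono) auto
      finally have "L / 2 \<le> (1-d) * r \<epsilon> * real N" by (simp add: algebra_simps)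
      then have "exp (-((1-d) * r \<epsilon> * real N)) \<le> exp (- (L / 2))" by simp
      also have "\<dots> \<le> exp (- ln (6 / \<delta>))" unfolding L_def by simp
      also have "\<dots> = \<delta> / 6" using \<delta> by (simp add: exp_minus)
      finally show ?thesis .
    qed
    have e5: "real N * (2 * C + 2 * (1+d)^2) * (r \<epsilon>)^2 / \<eta>^2 \<le> \<delta> / 6"
    proof -
      have "real N * (r \<epsilon>)^2 \<le> (L / r \<epsilon> + 1) * (r \<epsilon>)^2" using N2 by (intro mult_right_mono) auto
      also have "\<dots> = L * r \<epsilon> + r \<epsilon> * r \<epsilon>" using rp by (simp add: field_simps power2_eq_square)
      also have "\<dots> \<le> L * r \<epsilon> + r \<epsilon>" using rp r14 by (simp add: mult_left_le_one_le)
      also have "\<dots> = (L + 1) * r \<epsilon>" by (simp add: algebra_simps)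
      also have "\<dots> \<le> (L + 1) * (\<delta> * \<eta>^2 / (6 * c * (L + 1)))" using r\<rho> \<rho> L by (intro mult_left_mono) auto
      also have "\<dots> = \<delta> * \<eta>^2 / (6 * c)"
      proof -
        have L1: "L + 1 \<noteq> 0" using L by auto
        have "(L + 1) * (\<delta> * \<eta>^2 / (6 * c * (L + 1))) = (\<delta> * \<eta>^2 * (L + 1)) / ((6 * c) * (L + 1))"
          by (simp add: ac_simps)
        also have "\<dots> = \<delta> * \<eta>^2 / (6 * c)" by (rule mult_divide_mult_cancel_right[OF L1])
        finally show ?thesis .
      qed
      finally have Nr: "real N * (r \<epsilon>)^2 \<le> \<delta> * \<eta>^2 / (6 * c)" .
      have "real N * (2 * C + 2 * (1+d)^2) * (r \<epsilon>)^2 / \<eta>^2 = (real N * (r \<epsilon>)^2) * (c / \<eta>^2)"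
        unfolding c_def by (simp add: field_simps)
      also have "\<dots> \<le> (\<delta> * \<eta>^2 / (6 * c)) * (c / \<eta>^2)" using Nr c by (intro mult_right_mono) auto
      also have "\<dots> = \<delta> / 6" using c \<eta> by (simp add: field_simps)
      finally show ?thesis .
    qed
    show "\<bar>measure (M x \<epsilon>) {\<omega> \<in> space (M x \<epsilon>).
               t \<le> r \<epsilon> / e \<epsilon> * (\<Sum>n. \<xi> x \<epsilon> (Suc n) \<omega> * \<zeta> x \<epsilon> n \<omega>)} - exp (- t)\<bar> < \<delta>"
      using P2 \<eta>(3) e2 e3 e4 e5 \<delta> by linarith
  qed
qed

end
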